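(* Let $n\in\mathbb N$, $\psi_1,\dots,\psi_n\in\bar P_0\mathcal H$ and $E_1,\dots,E_n\in\mathbb C$ be such that $E_1=\langle\psi_0,V\psi_0\rangle$, for all $2\le m\le n$ $$E_m=-\sum_{k=2}^{m}\sum_{\substack{j_1+\dots+j_k=m\\ j_s\ge1}}\Big\langle\psi_0,(E_{j_1}-\delta_{1j_1}V)\prod_{s=2}^{k}\Big\{(H_0-E_0)^{-1}\bar P_0(E_{j_s}-\delta_{1j_s}V)\Big\}\psi_0\Big\rangle,$$ and for all $1\le m\le n$ $$\psi_m=\sum_{k=1}^{m}\sum_{\substack{j_1+\dots+j_k=m\\ j_s\ge1}}\prod_{s=1}^{k}\Big\{(H_0-E_0)^{-1}\bar P_0(E_{j_s}-\delta_{1j_s}V)\Big\}\psi_0,$$ where it is assumed that all expressions on the right-hand sides are well defined (every vector to which $V$ is applied lies in ${\rm dom}(V)$, every vector to which $(H_0-E_0)^{-1}\bar P_0$ is applied lies in its domain). Then for all $m\in\{1,\dots,n\}$ $$H_0\psi_m+V\psi_{m-1}=\sum_{k=0}^{m}E_k\psi_{m-k}.$$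
   Context: Let $H_0$ and $V$ be self-adjoint operators in a Hilbert space $\mathcal H$ with $V$ $H_0$-bounded, and let $\psi_0$ be a normalized vector with $H_0\psi_0=E_0\psi_0$ and $\ker(H_0-E_0)=\mathbb C\psi_0$. $P_0$ is the orthogonal projection onto $\mathbb C\psi_0$, $\bar P_0=1-P_0$. The operator $(H_0-E_0)^{-1}\bar P_0$ maps a vector $\xi$ to the unique $\chi\in{\rm dom}(H_0)\cap\bar P_0\mathcal H$ with $(H_0-E_0)\chi=\bar P_0\xi$; its domain consists of those $\xi$ for which such $\chi$ exists. $\delta_{ij}$ is the Kronecker delta. *)

theory Defs
  imports Complex_Main
begin

text \<open>HOL has no complex inner product spaces, so we introduce them as a type class:
  an abelian group with complex scalar multiplication and a complex inner product
  (linear in the second, conjugate-linear in the first argument, physics convention),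
  complete w.r.t. the induced norm.\<close>

class complex_hilbert = ab_group_add +
  fixes hscale :: "complex \<Rightarrow> 'a \<Rightarrow> 'a"
    and hinner :: "'a \<Rightarrow> 'a \<Rightarrow> complex"
  assumes hscale_add_right: "hscale c (x + y) = hscale c x + hscale c y"
    and hscale_add_left: "hscale (a + b) x = hscale a x + hscale b x"
    and hscale_hscale: "hscale a (hscale b x) = hscale (a * b) x"
    and hscale_one: "hscale 1 x = x"
    and hinner_add_right: "hinner x (y + z) = hinner x y + hinner x z"
    and hinner_hscale_right: "hinner x (hscale c y) = c * hinner x y"
    and hinner_conj: "hinner y x = cnj (hinner x y)"
    and hinner_nonneg: "0 \<le> Re (hinner x x)"
    and hinner_definite: "hinner x x = 0 \<Longrightarrow> x = 0"
    and hcomplete: "(\<forall>e>(0::real). \<exists>N::nat. \<forall>p\<ge>N. \<forall>q\<ge>N. Re (hinner (X p - X q) (X p - X q)) < e)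
        \<Longrightarrow> (\<exists>L. \<forall>e>0. \<exists>N::nat. \<forall>p\<ge>N. Re (hinner (X p - L) (X p - L)) < e)"

definition hnorm :: "'a::complex_hilbert \<Rightarrow> real" where
  "hnorm x = sqrt (Re (hinner x x))"

definition lin_op :: "'a::complex_hilbert set \<Rightarrow> ('a \<Rightarrow> 'a) \<Rightarrow> bool" where
  "lin_op D A \<longleftrightarrow> 0 \<in> D \<and>
     (\<forall>x\<in>D. \<forall>y\<in>D. x + y \<in> D \<and> A (x + y) = A x + A y) \<and>
     (\<forall>c. \<forall>x\<in>D. hscale c x \<in> D \<and> A (hscale c x) = hscale c (A x))"

definition dense_set :: "'a::complex_hilbert set \<Rightarrow> bool" where
  "dense_set D \<longleftrightarrow> (\<forall>x. \<forall>e>0. \<exists>d\<in>D. hnorm (x - d) < e)"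

definition adj_domain :: "'a::complex_hilbert set \<Rightarrow> ('a \<Rightarrow> 'a) \<Rightarrow> 'a set" where
  "adj_domain D A = {y. \<exists>z. \<forall>x\<in>D. hinner (A x) y = hinner x z}"

definition self_adjoint :: "'a::complex_hilbert set \<Rightarrow> ('a \<Rightarrow> 'a) \<Rightarrow> bool" where
  "self_adjoint D A \<longleftrightarrow> lin_op D A \<and> dense_set D \<and> adj_domain D A = D \<and>
     (\<forall>x\<in>D. \<forall>y\<in>D. hinner (A x) y = hinner x (A y))"

definition rel_bounded :: "'a::complex_hilbert set \<Rightarrow> ('a \<Rightarrow> 'a) \<Rightarrow> 'a set \<Rightarrow> ('a \<Rightarrow> 'a) \<Rightarrow> bool" where
  "rel_bounded DA A DB B \<longleftrightarrow> DA \<subseteq> DB \<and>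
     (\<exists>a b. 0 \<le> a \<and> 0 \<le> b \<and> (\<forall>x\<in>DA. hnorm (B x) \<le> a * hnorm (A x) + b * hnorm x))"

definition proj0 :: "'a::complex_hilbert \<Rightarrow> 'a \<Rightarrow> 'a" where
  "proj0 \<psi>0 x = hscale (hinner \<psi>0 x) \<psi>0"

definition projc :: "'a::complex_hilbert \<Rightarrow> 'a \<Rightarrow> 'a" where
  "projc \<psi>0 x = x - proj0 \<psi>0 x"

definition red_res_rel :: "'a::complex_hilbert set \<Rightarrow> ('a \<Rightarrow> 'a) \<Rightarrow> complex \<Rightarrow> 'a \<Rightarrow> 'a \<Rightarrow> 'a \<Rightarrow> bool" where
  "red_res_rel D0 h0 E0 \<psi>0 \<xi> \<chi> \<longleftrightarrow>
     \<chi> \<in> D0 \<and> proj0 \<psi>0 \<chi> = 0 \<and> h0 \<chi> - hscale E0 \<chi> = projc \<psi>0 \<xi>"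

definition red_res_dom :: "'a::complex_hilbert set \<Rightarrow> ('a \<Rightarrow> 'a) \<Rightarrow> complex \<Rightarrow> 'a \<Rightarrow> 'a set" where
  "red_res_dom D0 h0 E0 \<psi>0 = {\<xi>. \<exists>\<chi>. red_res_rel D0 h0 E0 \<psi>0 \<xi> \<chi>}"

text \<open>(H0 - E0)^{-1} Pbar0 applied to xi (the unique solution, on its domain).\<close>
definition red_res :: "'a::complex_hilbert set \<Rightarrow> ('a \<Rightarrow> 'a) \<Rightarrow> complex \<Rightarrow> 'a \<Rightarrow> 'a \<Rightarrow> 'a" where
  "red_res D0 h0 E0 \<psi>0 \<xi> = (THE \<chi>. red_res_rel D0 h0 E0 \<psi>0 \<xi> \<chi>)"

definition fac :: "('a::complex_hilbert \<Rightarrow> 'a) \<Rightarrow> (nat \<Rightarrow> complex) \<Rightarrow> nat \<Rightarrow> 'a \<Rightarrow> 'a" where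
  "fac v E j y = hscale (E j) y - (if j = 1 then v y else 0)"

text \<open>prod_fac [j1,...,jk] x = R(E_j1 - d V) ... R(E_jk - d V) x, leftmost factor applied last;
  E 0 is the eigenvalue E0.\<close>
primrec prod_fac :: "'a::complex_hilbert set \<Rightarrow> ('a \<Rightarrow> 'a) \<Rightarrow> ('a \<Rightarrow> 'a) \<Rightarrow> (nat \<Rightarrow> complex) \<Rightarrow> 'a
    \<Rightarrow> nat list \<Rightarrow> 'a \<Rightarrow> 'a" where
  "prod_fac D0 h0 v E \<psi>0 [] x = x"
| "prod_fac D0 h0 v E \<psi>0 (j # js) x =
     red_res D0 h0 (E 0) \<psi>0 (fac v E j (prod_fac D0 h0 v E \<psi>0 js x))"

primrec prod_wd :: "'a::complex_hilbert set \<Rightarrow> ('a \<Rightarrow> 'a) \<Rightarrow> 'a set \<Rightarrow> ('a \<Rightarrow> 'a) \<Rightarrow> (nat \<Rightarrow> complex)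
    \<Rightarrow> 'a \<Rightarrow> nat list \<Rightarrow> 'a \<Rightarrow> bool" where
  "prod_wd D0 h0 DV v E \<psi>0 [] x = True"
| "prod_wd D0 h0 DV v E \<psi>0 (j # js) x =
     (prod_wd D0 h0 DV v E \<psi>0 js x \<and>
      (j = 1 \<longrightarrow> prod_fac D0 h0 v E \<psi>0 js x \<in> DV) \<and>
      fac v E j (prod_fac D0 h0 v E \<psi>0 js x) \<in> red_res_dom D0 h0 (E 0) \<psi>0)"

definition compositions :: "nat \<Rightarrow> nat \<Rightarrow> nat list set" where
  "compositions m k = {js. length js = k \<and> (\<forall>j\<in>set js. 1 \<le> j) \<and> sum_list js = m}"

end

theory Submission
  imports Defs
begin


interpretation hm: module "hscale :: complex \<Rightarrow> 'a::complex_hilbert \<Rightarrow> 'a"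
  by unfold_locales (auto simp: hscale_add_right hscale_add_left hscale_hscale hscale_one)

lemma hinner_zero_right[simp]: "hinner x 0 = 0"
  using hinner_add_right[of x 0 0] by simp

lemma hinner_minus_right[simp]: "hinner x (- y) = - hinner x y"
  using hinner_hscale_right[of x "-1" y] by simp

lemma hinner_diff_right: "hinner x (y - z) = hinner x y - hinner x z"
  using hinner_add_right[of x y "-z"] by simp

lemma hinner_sum_right: "hinner x (sum f A) = (\<Sum>a\<in>A. hinner x (f a))"
  by (induction A rule: infinite_finite_induct) (auto simp: hinner_add_right)

lemma proj0_add: "proj0 p (x + y) = proj0 p x + proj0 p y"
  by (simp add: proj0_def hinner_add_right hscale_add_left)

lemma projc_add: "projc p (x + y) = projc p x + projc p y"
  by (simp add: projc_def proj0_add)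

lemma proj0_diff: "proj0 p (x - y) = proj0 p x - proj0 p y"
  by (simp add: proj0_def hinner_diff_right hm.scale_left_diff_distrib)

lemma projc_zero[simp]: "projc p 0 = 0"
  by (simp add: projc_def proj0_def)

lemma projc_sum: "projc p (sum f A) = (\<Sum>a\<in>A. projc p (f a))"
  by (induction A rule: infinite_finite_induct) (auto simp: projc_add)

lemma lin_op_diff:
  assumes "lin_op D A" "x \<in> D" "y \<in> D"
  shows "x - y \<in> D \<and> A (x - y) = A x - A y"
proof -
  have m: "hscale (-1) z = - z" for z :: 'a
    using hm.scale_minus_left[of 1 z] by simp
  have "- y \<in> D" "A (- y) = - A y"
    using assms m unfolding lin_op_def by metis+
  then show ?thesis using assms unfolding lin_op_def by (metis diff_conv_add_uminus)
qed

lemma lin_op_sum: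
  assumes "lin_op D A" "\<forall>x\<in>S. f x \<in> D"
  shows "sum f S \<in> D \<and> A (sum f S) = (\<Sum>x\<in>S. A (f x))"
  using assms(2)
proof (induction S rule: infinite_finite_induct)
  case (infinite S)
  then show ?case using assms(1) unfolding lin_op_def
    by (metis hm.scale_zero_left sum.infinite)
next
  case empty
  then show ?case using assms(1) unfolding lin_op_def
    by (metis hm.scale_zero_left sum.empty)
next
  case (insert x F)
  then show ?case using assms(1) unfolding lin_op_def by auto
qed

definition comps :: "nat \<Rightarrow> nat list set" where
  "comps m = {js. (\<forall>j\<in>set js. 1 \<le> j) \<and> sum_list js = m}"

lemma length_le_sum_list: "(\<forall>j\<in>set js. 1 \<le> j) \<Longrightarrow> length js \<le> sum_list (js::nat list)"
  by (induction js) auto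

lemma finite_comps: "finite (comps m)"
proof -
  have "comps m \<subseteq> {xs. set xs \<subseteq> {1..m} \<and> length xs \<le> m}"
    unfolding comps_def using length_le_sum_list member_le_sum_list by fastforce
  then show ?thesis by (rule finite_subset) (simp add: finite_lists_length_le)
qed

lemma comps_0: "comps 0 = {[]}"
  unfolding comps_def apply (rule set_eqI) apply (case_tac x) by auto

lemma comps_regroup:
  assumes "1 \<le> m"
  shows "(\<Sum>k=1..m. \<Sum>js\<in>compositions m k. f js) = (\<Sum>js\<in>comps m. f js)"
proof -
  have "(\<Sum>k\<in>{1..m}. sum f {js\<in>comps m. length js = k}) = sum f (comps m)"
  proof (rule sum.group[OF finite_comps])
    show "length ` comps m \<subseteq> {1..m}"
    proof
      fix x assume "x \<in> length ` comps m"
      then obtain js where js: "js \<in> comps m" "x = length js" by auto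
      then have "js \<noteq> []" using assms by (auto simp: comps_def)
      then show "x \<in> {1..m}" using js length_le_sum_list[of js]
        by (auto simp: comps_def Suc_le_eq)
    qed
  qed simp
  moreover have "{js\<in>comps m. length js = k} = compositions m k" for k
    unfolding comps_def compositions_def by auto
  ultimately show ?thesis by simp
qed

lemma comps_regroup2:
  assumes "2 \<le> m"
  shows "(\<Sum>k=2..m. \<Sum>js\<in>compositions m k. f js) = (\<Sum>js\<in>{js\<in>comps m. 2 \<le> length js}. f js)"
proof -
  have "(\<Sum>k\<in>{2..m}. sum f {js\<in>{js\<in>comps m. 2 \<le> length js}. length js = k})
        = sum f {js\<in>comps m. 2 \<le> length js}"
  proof (rule sum.group)
    show "length ` {js\<in>comps m. 2 \<le> length js} \<subseteq> {2..m}"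
    proof
      fix x assume "x \<in> length ` {js\<in>comps m. 2 \<le> length js}"
      then obtain js where js: "js \<in> comps m" "2 \<le> length js" "x = length js" by auto
      then show "x \<in> {2..m}" using length_le_sum_list[of js]
        by (auto simp: comps_def)
    qed
  qed (use finite_comps in auto)
  moreover have "k \<in> {2..m} \<Longrightarrow> {js\<in>{js\<in>comps m. 2 \<le> length js}. length js = k} = compositions m k" for k
    unfolding comps_def compositions_def by auto
  ultimately show ?thesis by simp
qed

lemma comps_split:
  assumes "1 \<le> m"
  shows "(\<Sum>js\<in>comps m. f js) = (\<Sum>j=1..m. \<Sum>rest\<in>comps (m - j). f (j # rest))"
proof -
  have "(\<Sum>j\<in>{1..m}. sum f {js\<in>comps m. hd js = j}) = sum f (comps m)"
  proof (rule sum.group[OF finite_comps])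
    show "hd ` comps m \<subseteq> {1..m}"
    proof
      fix x assume "x \<in> hd ` comps m"
      then obtain js where js: "js \<in> comps m" "x = hd js" by auto
      then have "js \<noteq> []" using assms by (auto simp: comps_def)
      then show "x \<in> {1..m}" using js member_le_sum_list[of "hd js" js]
        by (auto simp: comps_def)
    qed
  qed simp
  moreover have "{js\<in>comps m. hd js = j} = (#) j ` comps (m - j)" if "j \<in> {1..m}" for j
  proof
    show "{js\<in>comps m. hd js = j} \<subseteq> (#) j ` comps (m - j)"
    proof
      fix js assume js: "js \<in> {js\<in>comps m. hd js = j}"
      then have "js \<noteq> []" using assms by (auto simp: comps_def)
      then obtain r where "js = j # r" using js by (cases js) auto
      then show "js \<in> (#) j ` comps (m - j)" using js by (auto simp: comps_def)
    qed
    show "(#) j ` comps (m - j) \<subseteq> {js\<in>comps m. hd js = j}"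
      using that by (auto simp: comps_def)
  qed
  ultimately have "sum f (comps m) = (\<Sum>j\<in>{1..m}. sum f ((#) j ` comps (m - j)))" by simp
  also have "\<dots> = (\<Sum>j=1..m. \<Sum>rest\<in>comps (m - j). f (j # rest))"
    by (simp add: sum.reindex)
  finally show ?thesis by simp
qed

lemma comps_split2:
  assumes "2 \<le> m"
  shows "(\<Sum>js\<in>{js\<in>comps m. 2 \<le> length js}. f js) = (\<Sum>j=1..m-1. \<Sum>rest\<in>comps (m - j). f (j # rest))"
proof -
  let ?S = "{js\<in>comps m. 2 \<le> length js}"
  have "(\<Sum>j\<in>{1..m-1}. sum f {js\<in>?S. hd js = j}) = sum f ?S"
  proof (rule sum.group)
    show "hd ` ?S \<subseteq> {1..m-1}"
    proof
      fix x assume "x \<in> hd ` ?S"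
      then obtain js where js: "js \<in> ?S" "x = hd js" by auto
      then obtain a r where ar: "js = a # r" "r \<noteq> []" by (cases js) (auto simp: Suc_le_length_iff)
      then obtain b r' where br: "r = b # r'" by (cases r) auto
      have c: "\<forall>j\<in>set js. 1 \<le> j" "sum_list js = m" using js(1) by (auto simp: comps_def)
      then have "1 \<le> a" "1 \<le> b" "a + (b + sum_list r') = m" using ar br by auto
      then show "x \<in> {1..m-1}" using js(2) ar by simp
    qed
  qed (use finite_comps in auto)
  moreover have "{js\<in>?S. hd js = j} = (#) j ` comps (m - j)" if "j \<in> {1..m-1}" for j
  proof
    show "{js\<in>?S. hd js = j} \<subseteq> (#) j ` comps (m - j)"
    proof
      fix js assume js: "js \<in> {js\<in>?S. hd js = j}"
      then have "js \<noteq> []" by auto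
      then obtain r where "js = j # r" using js by (cases js) auto
      then show "js \<in> (#) j ` comps (m - j)" using js by (auto simp: comps_def)
    qed
    show "(#) j ` comps (m - j) \<subseteq> {js\<in>?S. hd js = j}"
    proof
      fix js assume "js \<in> (#) j ` comps (m - j)"
      then obtain r where r: "r \<in> comps (m - j)" "js = j # r" by auto
      then have "r \<noteq> []" using that by (auto simp: comps_def)
      then show "js \<in> {js\<in>?S. hd js = j}" using r that by (cases r) (auto simp: comps_def)
    qed
  qed
  ultimately have "sum f ?S = (\<Sum>j\<in>{1..m-1}. sum f ((#) j ` comps (m - j)))" by simp
  also have "\<dots> = (\<Sum>j=1..m-1. \<Sum>rest\<in>comps (m - j). f (j # rest))"
    by (simp add: sum.reindex)
  finally show ?thesis by simp
qed


theorem mainTheorem5: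
  fixes D0 DV :: "'a::complex_hilbert set" and h0 v :: "'a \<Rightarrow> 'a"
    and \<psi> :: "nat \<Rightarrow> 'a" and E :: "nat \<Rightarrow> complex" and n :: nat
  assumes H0_sa: "self_adjoint D0 h0"
    and V_sa: "self_adjoint DV v"
    and V_bdd: "rel_bounded D0 h0 DV v"
    and psi0_dom: "\<psi> 0 \<in> D0"
    and psi0_norm: "hnorm (\<psi> 0) = 1"
    and psi0_eig: "h0 (\<psi> 0) = hscale (E 0) (\<psi> 0)"
    and kernel: "{x \<in> D0. h0 x = hscale (E 0) x} = {hscale c (\<psi> 0) | c. True}"
    and psi_perp: "\<forall>m\<in>{1..n}. proj0 (\<psi> 0) (\<psi> m) = 0"
    and E1: "E 1 = hinner (\<psi> 0) (v (\<psi> 0))"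
    and wd_E: "\<forall>m\<in>{2..n}. \<forall>k\<in>{2..m}. \<forall>j1 js. j1 # js \<in> compositions m k \<longrightarrow>
                 prod_wd D0 h0 DV v E (\<psi> 0) js (\<psi> 0) \<and>
                 (j1 = 1 \<longrightarrow> prod_fac D0 h0 v E (\<psi> 0) js (\<psi> 0) \<in> DV)"
    and wd_psi: "\<forall>m\<in>{1..n}. \<forall>k\<in>{1..m}. \<forall>js\<in>compositions m k.
                 prod_wd D0 h0 DV v E (\<psi> 0) js (\<psi> 0)"
    and Em: "\<forall>m\<in>{2..n}. E m = - (\<Sum>k=2..m. \<Sum>js\<in>compositions m k.
                 hinner (\<psi> 0) (fac v E (hd js) (prod_fac D0 h0 v E (\<psi> 0) (tl js) (\<psi> 0))))"
    and psim: "\<forall>m\<in>{1..n}. \<psi> m = (\<Sum>k=1..m. \<Sum>js\<in>compositions m k.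
                 prod_fac D0 h0 v E (\<psi> 0) js (\<psi> 0))"
  shows "\<forall>m\<in>{1..n}. h0 (\<psi> m) + v (\<psi> (m - 1)) = (\<Sum>k=0..m. hscale (E k) (\<psi> (m - k)))"
proof
  fix m assume m: "m \<in> {1..n}"
  have lin_h0: "lin_op D0 h0" using H0_sa by (simp add: self_adjoint_def)
  have lin_v: "lin_op DV v" using V_sa by (simp add: self_adjoint_def)
  define pf where "pf js = prod_fac D0 h0 v E (\<psi> 0) js (\<psi> 0)" for js
  define R where "R = red_res D0 h0 (E 0) (\<psi> 0)"
  have nrm: "hinner (\<psi> 0) (\<psi> 0) = 1"
  proof -
    have r: "Re (hinner (\<psi> 0) (\<psi> 0)) = 1" using psi0_norm unfolding hnorm_def
      by simp
    have h: "hinner (\<psi> 0) (\<psi> 0) = cnj (hinner (\<psi> 0) (\<psi> 0))" by (rule hinner_conj)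
    have "Im (hinner (\<psi> 0) (\<psi> 0)) = Im (cnj (hinner (\<psi> 0) (\<psi> 0)))" using h by (rule arg_cong)
    then have "Im (hinner (\<psi> 0) (\<psi> 0)) = 0" by simp
    with r show ?thesis by (simp add: complex_eq_iff)
  qed
  have uniq: "a = b" if a: "red_res_rel D0 h0 (E 0) (\<psi> 0) \<xi> a"
    and b: "red_res_rel D0 h0 (E 0) (\<psi> 0) \<xi> b" for \<xi> a b
  proof -
    from a have aD: "a \<in> D0" "proj0 (\<psi> 0) a = 0" "h0 a - hscale (E 0) a = projc (\<psi> 0) \<xi>"
      by (auto simp: red_res_rel_def)
    from b have bD: "b \<in> D0" "proj0 (\<psi> 0) b = 0" "h0 b - hscale (E 0) b = projc (\<psi> 0) \<xi>"
      by (auto simp: red_res_rel_def)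
    have d: "a - b \<in> D0" "h0 (a - b) = h0 a - h0 b" using lin_op_diff[OF lin_h0 aD(1) bD(1)] by auto
    have "h0 a - h0 b = hscale (E 0) a - hscale (E 0) b"
      using aD(3) bD(3) by (simp add: algebra_simps)
    then have "h0 (a - b) = hscale (E 0) (a - b)"
      using d(2) by (simp add: hm.scale_right_diff_distrib)
    then have "a - b \<in> {x \<in> D0. h0 x = hscale (E 0) x}" using d(1) by simp
    then obtain c where c: "a - b = hscale c (\<psi> 0)" using kernel by auto
    have "proj0 (\<psi> 0) (a - b) = 0" using aD(2) bD(2) by (simp add: proj0_diff)
    moreover have "proj0 (\<psi> 0) (a - b) = a - b"
      using c nrm by (simp add: proj0_def hinner_hscale_right)
    ultimately show ?thesis by simp
  qed
  have RR: "red_res_rel D0 h0 (E 0) (\<psi> 0) \<xi> (R \<xi>)"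
    if dom: "\<xi> \<in> red_res_dom D0 h0 (E 0) (\<psi> 0)" for \<xi>
  proof -
    obtain \<chi> where c: "red_res_rel D0 h0 (E 0) (\<psi> 0) \<xi> \<chi>"
      using dom unfolding red_res_dom_def by blast
    have "R \<xi> = \<chi>" unfolding R_def red_res_def
      by (rule the_equality) (use uniq c in blast)+
    with c show ?thesis by simp
  qed
  have wd: "prod_wd D0 h0 DV v E (\<psi> 0) js (\<psi> 0)" if "m' \<in> {1..n}" "js \<in> comps m'" for m' js
  proof -
    have "js \<noteq> []" using that by (auto simp: comps_def)
    then have "length js \<in> {1..m'}" using that length_le_sum_list[of js]
      by (auto simp: comps_def Suc_le_eq)
    moreover have "js \<in> compositions m' (length js)"
      using that by (auto simp: comps_def compositions_def)
    ultimately show ?thesis using wd_psi that(1) by blast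
  qed
  have step: "pf (j # rest) \<in> D0 \<and>
      h0 (pf (j # rest)) = hscale (E 0) (pf (j # rest)) + projc (\<psi> 0) (fac v E j (pf rest)) \<and>
      (j = 1 \<longrightarrow> pf rest \<in> DV)"
    if "m' \<in> {1..n}" "j # rest \<in> comps m'" for m' j rest
  proof -
    have w: "(j = 1 \<longrightarrow> pf rest \<in> DV) \<and> fac v E j (pf rest) \<in> red_res_dom D0 h0 (E 0) (\<psi> 0)"
      using wd[OF that] by (simp add: pf_def)
    have e: "pf (j # rest) = R (fac v E j (pf rest))" by (simp add: pf_def R_def)
    have "red_res_rel D0 h0 (E 0) (\<psi> 0) (fac v E j (pf rest)) (pf (j # rest))"
      using RR w e by simp
    then show ?thesis using w unfolding red_res_rel_def by (simp add: diff_eq_eq)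
  qed
  have psi_eq: "\<psi> i = (\<Sum>js\<in>comps i. pf js)" if "i \<le> n" for i
  proof (cases "i = 0")
    case True then show ?thesis by (simp add: comps_0 pf_def)
  next
    case False
    then have "i \<in> {1..n}" using that by auto
    then show ?thesis using psim comps_regroup[of i] by (simp add: pf_def)
  qed
  have perp: "hinner (\<psi> 0) (\<psi> i) = 0" if "i \<in> {1..n}" for i
  proof -
    have "hscale (hinner (\<psi> 0) (\<psi> i)) (\<psi> 0) = 0" using psi_perp that by (simp add: proj0_def)
    then have "hinner (\<psi> 0) (hscale (hinner (\<psi> 0) (\<psi> i)) (\<psi> 0)) = 0" by simp
    then show ?thesis using nrm by (simp add: hinner_hscale_right)
  qed
  have facsum: "(\<Sum>rest\<in>comps (m - j). fac v E j (pf rest)) = fac v E j (\<psi> (m - j))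
       \<and> (j = 1 \<longrightarrow> \<psi> (m - 1) \<in> DV)" if j: "j \<in> {1..m}" for j
  proof -
    have pe: "\<psi> (m - j) = (\<Sum>rest\<in>comps (m - j). pf rest)"
      by (rule psi_eq) (use m in auto)
    have "(\<Sum>rest\<in>comps (m - j). fac v E j (pf rest)) =
        (\<Sum>rest\<in>comps (m - j). hscale (E j) (pf rest)) - (\<Sum>rest\<in>comps (m - j). (if j = 1 then v (pf rest) else 0))"
      by (simp add: fac_def sum_subtractf)
    also have "\<dots> = hscale (E j) (\<psi> (m - j)) - (if j = 1 then v (\<psi> (m - j)) else 0)"
    proof (cases "j = 1")
      case True
      have "\<forall>rest\<in>comps (m - 1). pf rest \<in> DV"
      proof
        fix rest assume "rest \<in> comps (m - 1)"
        then have "1 # rest \<in> comps m" using m by (auto simp: comps_def)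
        then show "pf rest \<in> DV" using step[OF m] by blast
      qed
      from lin_op_sum[OF lin_v this] show ?thesis using True pe
        by (simp add: hm.scale_sum_right)
    qed (simp add: pe hm.scale_sum_right)
    also have "\<dots> = fac v E j (\<psi> (m - j))" by (simp add: fac_def)
    finally have 1: "(\<Sum>rest\<in>comps (m - j). fac v E j (pf rest)) = fac v E j (\<psi> (m - j))" .
    have "\<forall>rest\<in>comps (m - 1). pf rest \<in> DV"
    proof
      fix rest assume "rest \<in> comps (m - 1)"
      then have "1 # rest \<in> comps m" using m by (auto simp: comps_def)
      then show "pf rest \<in> DV" using step[OF m] by blast
    qed
    moreover have "\<psi> (m - 1) = (\<Sum>rest\<in>comps (m - 1). pf rest)"
      by (rule psi_eq) (use m in auto)
    ultimately have "\<psi> (m - 1) \<in> DV" using lin_op_sum[OF lin_v, of "comps (m - 1)" pf] by simp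
    with 1 show ?thesis by simp
  qed
  have hfac: "hinner (\<psi> 0) (fac v E j y) = E j * hinner (\<psi> 0) y - (if j = 1 then hinner (\<psi> 0) (v y) else 0)"
    for j y by (simp add: fac_def hinner_diff_right hinner_hscale_right)
  have hv: "hinner (\<psi> 0) (v (\<psi> (m - 1))) = E m"
  proof (cases "m = 1")
    case True then show ?thesis using E1 by simp
  next
    case False
    then have m2: "m \<in> {2..n}" using m by auto
    have "E m = - (\<Sum>js\<in>{js\<in>comps m. 2 \<le> length js}.
          hinner (\<psi> 0) (fac v E (hd js) (pf (tl js))))"
      using Em m2 comps_regroup2[of m] by (simp add: pf_def)
    also have "\<dots> = - (\<Sum>j=1..m-1. \<Sum>rest\<in>comps (m - j). hinner (\<psi> 0) (fac v E j (pf rest)))"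
      using m2 comps_split2[of m "\<lambda>js. hinner (\<psi> 0) (fac v E (hd js) (pf (tl js)))"] by simp
    also have "\<dots> = - (\<Sum>j=1..m-1. hinner (\<psi> 0) (fac v E j (\<psi> (m - j))))"
    proof -
      have "(\<Sum>rest\<in>comps (m - j). hinner (\<psi> 0) (fac v E j (pf rest))) = hinner (\<psi> 0) (fac v E j (\<psi> (m - j)))"
        if "j \<in> {1..m-1}" for j
      proof -
        have "j \<in> {1..m}" using that by auto
        from facsum[OF this] show ?thesis by (simp add: hinner_sum_right[symmetric])
      qed
      then show ?thesis by simp
    qed
    also have "\<dots> = - (\<Sum>j=1..m-1. - (if j = 1 then hinner (\<psi> 0) (v (\<psi> (m - 1))) else 0))"
    proof -
      have "hinner (\<psi> 0) (fac v E j (\<psi> (m - j))) = - (if j = 1 then hinner (\<psi> 0) (v (\<psi> (m - 1))) else 0)"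
        if "j \<in> {1..m-1}" for j
      proof -
        have "m - j \<in> {1..n}" using that m by auto
        then show ?thesis using hfac[of j "\<psi> (m - j)"] perp by auto
      qed
      then show ?thesis by simp
    qed
    also have "\<dots> = hinner (\<psi> 0) (v (\<psi> (m - 1)))"
      using m2 by (auto simp: sum_negf)
    finally show ?thesis by simp
  qed
  define A where "A = (\<Sum>j=1..m. hscale (E j) (\<psi> (m - j)))"
  define B where "B = v (\<psi> (m - 1))"
  have h0psi: "h0 (\<psi> m) = hscale (E 0) (\<psi> m) + projc (\<psi> 0) (\<Sum>j=1..m. fac v E j (\<psi> (m - j)))"
  proof -
    have all: "\<forall>js\<in>comps m. pf js \<in> D0"
    proof
      fix js assume js: "js \<in> comps m"
      then have "js \<noteq> []" using m by (auto simp: comps_def)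
      then obtain j rest where "js = j # rest" by (cases js) auto
      then show "pf js \<in> D0" using step[OF m] js by blast
    qed
    have pm: "\<psi> m = (\<Sum>js\<in>comps m. pf js)" using psi_eq m by simp
    have "h0 (\<psi> m) = (\<Sum>js\<in>comps m. h0 (pf js))" using lin_op_sum[OF lin_h0 all] pm by simp
    also have "\<dots> = (\<Sum>j=1..m. \<Sum>rest\<in>comps (m - j). h0 (pf (j # rest)))"
      using comps_split[of m] m by simp
    also have "\<dots> = (\<Sum>j=1..m. \<Sum>rest\<in>comps (m - j).
         hscale (E 0) (pf (j # rest)) + projc (\<psi> 0) (fac v E j (pf rest)))"
    proof (rule sum.cong[OF refl], rule sum.cong[OF refl])
      fix j rest assume "j \<in> {1..m}" "rest \<in> comps (m - j)"
      then have "j # rest \<in> comps m" by (auto simp: comps_def)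
      then show "h0 (pf (j # rest)) = hscale (E 0) (pf (j # rest)) + projc (\<psi> 0) (fac v E j (pf rest))"
        using step[OF m] by blast
    qed
    also have "\<dots> = hscale (E 0) (\<Sum>j=1..m. \<Sum>rest\<in>comps (m - j). pf (j # rest))
         + projc (\<psi> 0) (\<Sum>j=1..m. \<Sum>rest\<in>comps (m - j). fac v E j (pf rest))"
      by (simp add: sum.distrib hm.scale_sum_right projc_sum)
    also have "\<dots> = hscale (E 0) (\<psi> m) + projc (\<psi> 0) (\<Sum>j=1..m. fac v E j (\<psi> (m - j)))"
      using comps_split[of m "pf"] m pm facsum by simp
    finally show ?thesis .
  qed
  have sfac: "(\<Sum>j=1..m. fac v E j (\<psi> (m - j))) = A - B"
    unfolding A_def B_def fac_def using m by (simp add: sum_subtractf)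
  have hA: "hinner (\<psi> 0) A = E m"
  proof -
    have "hinner (\<psi> 0) A = (\<Sum>j=1..m. E j * hinner (\<psi> 0) (\<psi> (m - j)))"
      unfolding A_def by (simp add: hinner_sum_right hinner_hscale_right)
    also have "\<dots> = (\<Sum>j=1..m. if j = m then E m else 0)"
    proof (rule sum.cong[OF refl])
      fix j assume j: "j \<in> {1..m}"
      show "E j * hinner (\<psi> 0) (\<psi> (m - j)) = (if j = m then E m else 0)"
      proof (cases "j = m")
        case True then show ?thesis using nrm by simp
      next
        case False
        then have "m - j \<in> {1..n}" using j m by auto
        then show ?thesis using perp False by simp
      qed
    qed
    also have "\<dots> = E m" using m by simp
    finally show ?thesis .
  qed
  have pc: "projc (\<psi> 0) (A - B) = A - B"
    unfolding projc_def proj0_def using hA hv by (simp add: hinner_diff_right B_def)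
  have "h0 (\<psi> m) + v (\<psi> (m - 1)) = hscale (E 0) (\<psi> m) + A"
    using h0psi sfac pc by (simp add: B_def)
  also have "\<dots> = (\<Sum>k=0..m. hscale (E k) (\<psi> (m - k)))"
    unfolding A_def by (simp add: sum.atLeast_Suc_atMost)
  finally show "h0 (\<psi> m) + v (\<psi> (m - 1)) = (\<Sum>k=0..m. hscale (E k) (\<psi> (m - k)))" .
qed
end
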